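(* Let $\mathcal{A}\subset\mathbb{Z}$ be a finite alphabet, let $G=(V,E)$ be a finite directed graph with edge labelling $\ell:E\to\mathcal{A}$, assume the matrix $M=\sum_{a\in\mathcal{A}}M_a$ is primitive, and let $\beta>1$ be a Pisot number, with $\mathcal{K}^+,\mu^+,\phi^+$ as described in the context. Then the set $\phi^+(\mathcal{K}^+)\subseteq\mathbb{R}$ is either finite or perfect (and thus uncountable). In the first case the measure $(\phi^+)_*(\mu^+)$ is purely atomic; in the second case it is continuous (has no atoms).
   Context: For $a\in\mathcal{A}$, $M_a$ is the $V\times V$ matrix with $(M_a)_{ij}=1$ if $(i,j)\in E$ and $\ell((i,j))=a$, and $0$ otherwise. By Perron–Frobenius, $M$ has a dominant eigenvalue $\lambda>0$ with positive left eigenvector $\mathbf v_L$ and right eigenvector $\mathbf v_R$, normalised by $\mathbf v_L^{\mathsf T}\mathbf v_R=1$. $\mathcal{K}^+\subseteq\mathcal{A}^{\mathbb{N}}$ is the set of sequences $(\ell(e_k))_{k\ge1}$ for infinite paths $e_1e_2\ldots$ in $G$ (terminal vertex of $e_j$ equals initial vertex of $e_{j+1}$). $\mu^+$ is the Borel probability measure on $\mathcal{K}^+$ with $\mu^+([\varepsilon_1,\ldots,\varepsilon_k])=\lambda^{-k}\mathbf v_L^{\mathsf T}M_{\varepsilon_1}\cdots M_{\varepsilon_k}\mathbf v_R$ on cylinder sets $[\varepsilon_1,\ldots,\varepsilon_k]=\{x\in\mathcal{K}^+: x_1=\varepsilon_1,\ldots,x_k=\varepsilon_k\}$. A Pisot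 number is an algebraic integer $>1$ all of whose other Galois conjugates have modulus $<1$ (integers $\ge2$ included). $\phi^+:\mathcal{K}^+\to\mathbb{R}$, $(x_k)\mapsto\sum_{k\ge1}x_k\beta^{-k}$, and $(\phi^+)_*(\mu^+)(A)=\mu^+((\phi^+)^{-1}(A))$. *)

theory Defs
  imports "HOL-Probability.Probability" "HOL-Computational_Algebra.Polynomial_Factorial"
begin

definition label_mat :: "('v::finite \<times> 'v) set \<Rightarrow> ('v \<times> 'v \<Rightarrow> int) \<Rightarrow> int \<Rightarrow> real^'v^'v" where
  "label_mat E l a = (\<chi> i j. if (i, j) \<in> E \<and> l (i, j) = a then 1 else 0)"

definition mat_pow :: "real^'n^'n \<Rightarrow> nat \<Rightarrow> real^'n^'n" where
  "mat_pow A k = ((\<lambda>B. B ** A) ^^ k) (mat 1)"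

definition primitive_mat :: "real^'n^'n \<Rightarrow> bool" where
  "primitive_mat A \<longleftrightarrow> (\<forall>i j. A $ i $ j \<ge> 0) \<and> (\<exists>k>0. \<forall>i j. mat_pow A k $ i $ j > 0)"

definition word_mat :: "('v::finite \<times> 'v) set \<Rightarrow> ('v \<times> 'v \<Rightarrow> int) \<Rightarrow> int list \<Rightarrow> real^'v^'v" where
  "word_mat E l ws = foldr (\<lambda>a B. label_mat E l a ** B) ws (mat 1)"

text \<open>Label sequences of infinite paths; sequences are indexed from 0 (x 0 = x_1).\<close>
definition Kplus :: "('v \<times> 'v) set \<Rightarrow> ('v \<times> 'v \<Rightarrow> int) \<Rightarrow> (nat \<Rightarrow> int) set" where
  "Kplus E l = {x. \<exists>e::nat \<Rightarrow> 'v \<times> 'v. (\<forall>k. e k \<in> E) \<and> (\<forall>k. snd (e k) = fst (e (Suc k)))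
                   \<and> (\<forall>k. x k = l (e k))}"

definition phi_plus :: "real \<Rightarrow> (nat \<Rightarrow> int) \<Rightarrow> real" where
  "phi_plus \<beta> x = (\<Sum>k. real_of_int (x k) / \<beta> ^ Suc k)"

definition pisot :: "real \<Rightarrow> bool" where
  "pisot \<beta> \<longleftrightarrow> \<beta> > 1 \<and> (\<exists>p :: int poly. lead_coeff p = 1 \<and> irreducible p
      \<and> poly (map_poly of_int p) \<beta> = 0
      \<and> (\<forall>z::complex. poly (map_poly of_int p) z = 0 \<and> z \<noteq> complex_of_real \<beta> \<longrightarrow> cmod z < 1))"

definition perfect_set :: "'a::topological_space set \<Rightarrow> bool" where
  "perfect_set S \<longleftrightarrow> closed S \<and> (\<forall>x\<in>S. x islimpt S)"

definition purely_atomic :: "'a measure \<Rightarrow> bool" where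
  "purely_atomic N \<longleftrightarrow> (\<exists>S. countable S \<and> S \<in> sets N \<and> (\<forall>x\<in>S. {x} \<in> sets N)
      \<and> emeasure N (space N - S) = 0)"

definition atomless :: "'a measure \<Rightarrow> bool" where
  "atomless N \<longleftrightarrow> (\<forall>x\<in>space N. {x} \<in> sets N \<and> emeasure N {x} = 0)"

end

theory Submission
  imports Defs
begin

locale gd =
  fixes E :: "('v::finite \<times> 'v) set" and l :: "'v \<times> 'v \<Rightarrow> int" and \<beta> :: real
  assumes beta: "\<beta> > 1" and outdeg: "\<And>u. \<exists>w. (u,w) \<in> E"
begin

fun pth :: "'v \<Rightarrow> 'v list \<Rightarrow> bool" where
  "pth u [] = True" | "pth u (w#ws) = ((u,w) \<in> E \<and> pth w ws)"
fun endv :: "'v \<Rightarrow> 'v list \<Rightarrow> 'v" where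
  "endv u [] = u" | "endv u (w#ws) = endv w ws"
fun lab :: "'v \<Rightarrow> 'v list \<Rightarrow> int list" where
  "lab u [] = []" | "lab u (w#ws) = l (u,w) # lab w ws"
fun ptl :: "real \<Rightarrow> int list \<Rightarrow> real" where
  "ptl y [] = y" | "ptl y (a#as) = ptl (\<beta>*y - of_int a) as"
fun psum :: "nat \<Rightarrow> 'v \<Rightarrow> ('v list \<Rightarrow> real) \<Rightarrow> real" where
  "psum 0 u F = F []"
| "psum (Suc n) u F = (\<Sum>j\<in>{j. (u,j)\<in>E}. psum n j (\<lambda>ws. F (j#ws)))"

lemma length_lab[simp]: "length (lab u ws) = length ws"
  by (induct ws arbitrary: u) auto

lemma pth_append: "pth u (xs@ys) \<longleftrightarrow> pth u xs \<and> pth (endv u xs) ys"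
  by (induct xs arbitrary: u) auto

lemma endv_append[simp]: "endv u (xs@ys) = endv (endv u xs) ys"
  by (induct xs arbitrary: u) auto

lemma lab_append: "lab u (xs@ys) = lab u xs @ lab (endv u xs) ys"
  by (induct xs arbitrary: u) auto

lemma ptl_append: "ptl y (as@bs) = ptl (ptl y as) bs"
  by (induct as arbitrary: y) auto

lemma ptl_diff: "ptl y as - ptl z as = \<beta>^length as * (y - z)"
proof (induct as arbitrary: y z)
  case (Cons a as)
  have "ptl (\<beta>*y - of_int a) as - ptl (\<beta>*z - of_int a) as = \<beta>^length as * ((\<beta>*y - of_int a) - (\<beta>*z - of_int a))"
    by (rule Cons)
  then show ?case by (simp add: algebra_simps)
qed simp

lemma psum_mono:
  "(\<And>ws. length ws = n \<Longrightarrow> pth u ws \<Longrightarrow> F ws \<le> G ws) \<Longrightarrow> psum n u F \<le> psum n u G"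
proof (induct n arbitrary: u F G)
  case (Suc n)
  show ?case by (simp, rule sum_mono, rule Suc.hyps) (use Suc.prems in auto)
qed simp

lemma psum_cong:
  "(\<And>ws. length ws = n \<Longrightarrow> pth u ws \<Longrightarrow> F ws = G ws) \<Longrightarrow> psum n u F = psum n u G"
  by (rule antisym; rule psum_mono; simp)

lemma psum_zero: "psum n u (\<lambda>_. 0) = 0"
  by (induct n arbitrary: u) auto

lemma psum_nonneg:
  "(\<And>ws. length ws = n \<Longrightarrow> pth u ws \<Longrightarrow> 0 \<le> F ws) \<Longrightarrow> 0 \<le> psum n u F"
  using psum_mono[of n u "\<lambda>_. 0" F] by (simp add: psum_zero)

lemma psum_cmult: "psum n u (\<lambda>ws. c * F ws) = c * psum n u F"
  by (induct n arbitrary: u F) (auto simp: sum_distrib_left)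

lemma psum_add: "psum n u (\<lambda>ws. F ws + G ws) = psum n u F + psum n u G"
  by (induct n arbitrary: u F G) (auto simp: sum.distrib)

lemma psum_sum: "psum n u (\<lambda>ws. \<Sum>y\<in>Y. F y ws) = (\<Sum>y\<in>Y. psum n u (F y))"
proof (induct n arbitrary: u F)
  case 0 then show ?case by simp
next
  case (Suc n)
  show ?case using Suc by (simp add: sum.swap[of _ Y])
qed

lemma psum_split:
  "psum (n+k) u F = psum n u (\<lambda>ws. psum k (endv u ws) (\<lambda>ws'. F (ws@ws')))"
  by (induct n arbitrary: u F) auto

end

locale gde = gd E l \<beta> for E :: "('v::finite \<times> 'v) set" and l \<beta> +
  fixes vR :: "'v \<Rightarrow> real" and lam :: real
  assumes lam_pos: "lam > 0" and vR_pos: "\<And>u. vR u > 0"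
    and eig: "\<And>u. (\<Sum>j\<in>{j. (u,j)\<in>E}. vR j) = lam * vR u"
begin

lemma psum_vR: "psum n u (\<lambda>ws. vR (endv u ws)) = lam^n * vR u"
proof (induct n arbitrary: u)
  case (Suc n)
  have "psum (Suc n) u (\<lambda>ws. vR (endv u ws)) = (\<Sum>j\<in>{j. (u,j)\<in>E}. lam^n * vR j)"
    using Suc by simp
  also have "\<dots> = lam^Suc n * vR u" by (simp add: sum_distrib_left[symmetric] eig)
  finally show ?case .
qed simp

end

context gd begin

definition Xs :: "'v \<Rightarrow> (nat \<Rightarrow> int) set" where
  "Xs u = {x. \<exists>p. p 0 = u \<and> (\<forall>k. (p k, p (Suc k)) \<in> E) \<and> (\<forall>k. x k = l (p k, p (Suc k)))}"
definition K :: "'v \<Rightarrow> real set" where "K u = phi_plus \<beta> ` Xs u"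
definition Lb :: real where "Lb = Max (insert 0 ((\<lambda>e. \<bar>real_of_int (l e)\<bar>) ` E))"
definition Bd :: real where "Bd = Lb / (\<beta> - 1)"

lemma Lb_ge: "e \<in> E \<Longrightarrow> \<bar>real_of_int (l e)\<bar> \<le> Lb"
  unfolding Lb_def by (rule Max_ge) auto

lemma Lb_nonneg: "0 \<le> Lb"
  unfolding Lb_def by (rule Max_ge) auto

lemma Bd_nonneg: "0 \<le> Bd"
  using Lb_nonneg beta unfolding Bd_def by simp

lemma Xs_bound: "x \<in> Xs u \<Longrightarrow> \<bar>real_of_int (x k)\<bar> \<le> Lb"
  unfolding Xs_def using Lb_ge by auto

lemma geo_bound: "summable (\<lambda>k. Lb / \<beta>^Suc k)" "(\<Sum>k. Lb / \<beta>^Suc k) = Bd"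
proof -
  have eq: "(\<lambda>k. Lb / \<beta>^Suc k) = (\<lambda>k. (Lb/\<beta>) * (inverse \<beta>)^k)"
    using beta by (auto simp: field_simps power_inverse)
  have "inverse \<beta> < inverse 1" using beta by (intro less_imp_inverse_less) auto
  then have n: "norm (inverse \<beta>) < 1" using beta by simp
  show "summable (\<lambda>k. Lb / \<beta>^Suc k)" unfolding eq
    by (intro summable_mult summable_geometric n)
  have "(\<Sum>k. (Lb/\<beta>) * (inverse \<beta>)^k) = (Lb/\<beta>) * (\<Sum>k. (inverse \<beta>)^k)"
    by (rule suminf_mult[OF summable_geometric[OF n]])
  also have "\<dots> = (Lb/\<beta>) * (1 / (1 - inverse \<beta>))"
    by (simp only: suminf_geometric[OF n])
  also have "\<dots> = Bd" using beta unfolding Bd_def by (simp add: field_simps)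
  finally show "(\<Sum>k. Lb / \<beta>^Suc k) = Bd" unfolding eq .
qed

lemma phi_summable:
  assumes "\<And>k. \<bar>real_of_int (x k)\<bar> \<le> Lb"
  shows "summable (\<lambda>k. real_of_int (x k) / \<beta>^Suc k)"
proof (rule summable_comparison_test[OF _ geo_bound(1)])
  have "norm (real_of_int (x n) / \<beta> ^ Suc n) \<le> Lb / \<beta> ^ Suc n" for n
  proof -
    have p: "0 < \<beta> ^ Suc n" using beta by simp
    have "norm (real_of_int (x n) / \<beta> ^ Suc n) = \<bar>real_of_int (x n)\<bar> / \<beta> ^ Suc n"
      using p by (simp add: abs_divide)
    also have "\<dots> \<le> Lb / \<beta> ^ Suc n" using p assms[of n] by (intro divide_right_mono) auto
    finally show ?thesis .
  qed
  then show "\<exists>N. \<forall>n\<ge>N. norm (real_of_int (x n) / \<beta> ^ Suc n) \<le> Lb / \<beta> ^ Suc n" by blast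
qed

lemma phi_bound:
  assumes "\<And>k. \<bar>real_of_int (x k)\<bar> \<le> Lb"
  shows "\<bar>phi_plus \<beta> x\<bar> \<le> Bd"
proof -
  have s: "summable (\<lambda>k. real_of_int (x k) / \<beta>^Suc k)" by (rule phi_summable[OF assms])
  have b: "\<bar>real_of_int (x k) / \<beta>^Suc k\<bar> \<le> Lb / \<beta>^Suc k" for k
  proof -
    have p: "0 < \<beta> ^ Suc k" using beta by simp
    have "\<bar>real_of_int (x k) / \<beta> ^ Suc k\<bar> = \<bar>real_of_int (x k)\<bar> / \<beta> ^ Suc k"
      using p by (simp add: abs_divide)
    also have "\<dots> \<le> Lb / \<beta> ^ Suc k" using p assms[of k] by (intro divide_right_mono) auto
    finally show ?thesis .
  qed
  have "phi_plus \<beta> x \<le> Bd"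
    unfolding phi_plus_def geo_bound(2)[symmetric]
    by (rule suminf_le[OF _ s geo_bound(1)]) (use b in \<open>unfold abs_le_iff, blast\<close>)
  moreover have "- Bd \<le> phi_plus \<beta> x"
  proof -
    have "(\<Sum>k. - (Lb / \<beta>^Suc k)) \<le> phi_plus \<beta> x"
      unfolding phi_plus_def
      by (rule suminf_le[OF _ summable_minus[OF geo_bound(1)] s]) (metis abs_le_iff b minus_le_iff)
    moreover have "(\<Sum>k. - (Lb / \<beta>^Suc k)) = - Bd"
      by (simp only: suminf_minus[OF geo_bound(1)] geo_bound(2))
    ultimately show ?thesis by linarith
  qed
  ultimately show ?thesis by auto
qed

lemma phi_step:
  assumes "\<And>k. \<bar>real_of_int (x k)\<bar> \<le> Lb"
  shows "phi_plus \<beta> x = (real_of_int (x 0) + phi_plus \<beta> (\<lambda>k. x (Suc k))) / \<beta>"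
proof -
  have s: "summable (\<lambda>k. real_of_int (x k) / \<beta>^Suc k)" by (rule phi_summable[OF assms])
  have s2: "summable (\<lambda>k. real_of_int (x (Suc k)) / \<beta>^Suc k)" by (rule phi_summable) (rule assms)
  have "(\<Sum>k. real_of_int (x (Suc k)) / \<beta>^Suc (Suc k)) = phi_plus \<beta> x - real_of_int (x 0) / \<beta>"
    using suminf_split_head[OF s] unfolding phi_plus_def by simp
  moreover have "(\<Sum>k. real_of_int (x (Suc k)) / \<beta>^Suc (Suc k)) = phi_plus \<beta> (\<lambda>k. x (Suc k)) / \<beta>"
    unfolding phi_plus_def suminf_divide[OF s2, symmetric] by (simp add: field_simps)
  ultimately show ?thesis using beta by (simp add: field_simps)
qed

lemma Xs_step: "x \<in> Xs u \<longleftrightarrow> (\<exists>w. (u,w) \<in> E \<and> x 0 = l (u,w) \<and> (\<lambda>k. x (Suc k)) \<in> Xs w)"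
proof
  assume "x \<in> Xs u"
  then obtain p where p: "p 0 = u" "\<forall>k. (p k, p (Suc k)) \<in> E" "\<forall>k. x k = l (p k, p (Suc k))"
    unfolding Xs_def by blast
  show "\<exists>w. (u,w) \<in> E \<and> x 0 = l (u,w) \<and> (\<lambda>k. x (Suc k)) \<in> Xs w"
    by (rule exI[of _ "p 1"]) (use p in \<open>auto simp: Xs_def intro!: exI[of _ "\<lambda>k. p (Suc k)"]\<close>)
next
  assume "\<exists>w. (u,w) \<in> E \<and> x 0 = l (u,w) \<and> (\<lambda>k. x (Suc k)) \<in> Xs w"
  then obtain w p where w: "(u,w) \<in> E" "x 0 = l (u,w)" and
    p: "p 0 = w" "\<forall>k. (p k, p (Suc k)) \<in> E" "\<forall>k. x (Suc k) = l (p k, p (Suc k))"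
    unfolding Xs_def by blast
  show "x \<in> Xs u" unfolding Xs_def
  proof (intro CollectI exI[of _ "case_nat u p"] conjI allI)
    fix k show "(case_nat u p k, case_nat u p (Suc k)) \<in> E" using w p by (cases k) auto
    show "x k = l (case_nat u p k, case_nat u p (Suc k))" using w p by (cases k) auto
  qed simp
qed

lemma Xs_nonempty: "\<exists>x. x \<in> Xs u"
proof -
  define f where "f v = (SOME w. (v,w) \<in> E)" for v
  have f: "(v, f v) \<in> E" for v unfolding f_def by (rule someI_ex) (rule outdeg)
  define p where "p n = (f^^n) u" for n
  have "(\<lambda>k. l (p k, p (Suc k))) \<in> Xs u" unfolding Xs_def
    by (rule CollectI, rule exI[of _ p]) (auto simp: p_def f)
  then show ?thesis by blast
qed

lemma K_bound: "y \<in> K u \<Longrightarrow> \<bar>y\<bar> \<le> Bd"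
  unfolding K_def using phi_bound Xs_bound by blast

lemma K_nonempty: "K u \<noteq> {}"
  unfolding K_def using Xs_nonempty by blast

lemma K_step: "y \<in> K u \<longleftrightarrow> (\<exists>w z. (u,w) \<in> E \<and> z \<in> K w \<and> y = (real_of_int (l (u,w)) + z) / \<beta>)"
proof
  assume "y \<in> K u"
  then obtain x where x: "x \<in> Xs u" "y = phi_plus \<beta> x" unfolding K_def by blast
  then obtain w where w: "(u,w) \<in> E" "x 0 = l (u,w)" "(\<lambda>k. x (Suc k)) \<in> Xs w"
    using Xs_step by blast
  have "y = (real_of_int (l (u,w)) + phi_plus \<beta> (\<lambda>k. x (Suc k))) / \<beta>"
    using x w phi_step[of x] Xs_bound by auto
  then show "\<exists>w z. (u,w) \<in> E \<and> z \<in> K w \<and> y = (real_of_int (l (u,w)) + z) / \<beta>"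
    using w unfolding K_def by blast
next
  assume "\<exists>w z. (u,w) \<in> E \<and> z \<in> K w \<and> y = (real_of_int (l (u,w)) + z) / \<beta>"
  then obtain w x where w: "(u,w) \<in> E" "x \<in> Xs w" "y = (real_of_int (l (u,w)) + phi_plus \<beta> x) / \<beta>"
    unfolding K_def by blast
  define x' where "x' = case_nat (l (u,w)) x"
  have x': "x' \<in> Xs u" using w Xs_step[of x' u] by (auto simp: x'_def)
  have "phi_plus \<beta> x' = y"
    using phi_step[of x'] Xs_bound[OF x'] w by (simp add: x'_def)
  then show "y \<in> K u" using x' unfolding K_def by blast
qed

lemma K_path: "y \<in> K u \<Longrightarrow> \<exists>ws. length ws = n \<and> pth u ws \<and> ptl y (lab u ws) \<in> K (endv u ws)"
proof (induct n arbitrary: u y)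
  case 0 then show ?case by (intro exI[of _ "[]"]) auto
next
  case (Suc n)
  then obtain w z where w: "(u,w) \<in> E" "z \<in> K w" "y = (real_of_int (l (u,w)) + z) / \<beta>"
    using K_step by blast
  then obtain ws where ws: "length ws = n" "pth w ws" "ptl z (lab w ws) \<in> K (endv w ws)"
    using Suc.hyps by blast
  have "\<beta> * y - real_of_int (l (u,w)) = z" using w(3) beta by (simp add: field_simps)
  then show ?case using ws w by (intro exI[of _ "w#ws"]) auto
qed

lemma K_path_inv: "pth u ws \<Longrightarrow> z \<in> K (endv u ws) \<Longrightarrow> \<exists>y\<in>K u. ptl y (lab u ws) = z"
proof (induct ws arbitrary: u z)
  case Nil then show ?case by auto
next
  case (Cons w ws)
  then obtain y' where y': "y' \<in> K w" "ptl y' (lab w ws) = z" by auto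
  define y where "y = (real_of_int (l (u,w)) + y') / \<beta>"
  have uw: "(u,w) \<in> E" using Cons.prems(1) by simp
  have "\<exists>w' z. (u,w') \<in> E \<and> z \<in> K w' \<and> y = (real_of_int (l (u,w')) + z) / \<beta>"
    using uw y'(1) unfolding y_def by blast
  then have "y \<in> K u" by (rule K_step[THEN iffD2])
  moreover have "\<beta> * y - real_of_int (l (u,w)) = y'" using beta by (simp add: y_def field_simps)
  ultimately show ?case using y' by (intro bexI[of _ y]) auto
qed

fun pref :: "(nat \<Rightarrow> int) \<Rightarrow> nat \<Rightarrow> int list" where
  "pref x 0 = []" | "pref x (Suc m) = x 0 # pref (\<lambda>k. x (Suc k)) m"

lemma length_pref[simp]: "length (pref x m) = m"
  by (induct m arbitrary: x) auto

lemma pref_eq: "length ws = m \<Longrightarrow> pref x m = ws \<longleftrightarrow> (\<forall>i<m. x i = ws ! i)"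
proof (induct m arbitrary: x ws)
  case (Suc m)
  then obtain a ws' where ws: "ws = a # ws'" by (cases ws) auto
  have "(\<forall>i<Suc m. x i = ws ! i) \<longleftrightarrow> x 0 = a \<and> (\<forall>i<m. x (Suc i) = ws' ! i)"
    unfolding ws by (auto simp: less_Suc_eq_0_disj)
  have l: "length ws' = m" using Suc.prems ws by simp
  have "pref x (Suc m) = ws \<longleftrightarrow> x 0 = a \<and> pref (\<lambda>k. x (Suc k)) m = ws'"
    unfolding ws by simp
  also have "\<dots> \<longleftrightarrow> x 0 = a \<and> (\<forall>i<m. x (Suc i) = ws' ! i)"
    using Suc.hyps[OF l] by simp
  finally show ?case using \<open>(\<forall>i<Suc m. x i = ws ! i) \<longleftrightarrow> _\<close> by simp
qed simp

lemma Xs_pref: "x \<in> Xs u \<Longrightarrow> \<exists>v. ptl (phi_plus \<beta> x) (pref x m) \<in> K v"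
proof (induct m arbitrary: x u)
  case 0 then show ?case unfolding K_def by auto
next
  case (Suc m)
  then obtain w where w: "(u,w) \<in> E" "x 0 = l (u,w)" "(\<lambda>k. x (Suc k)) \<in> Xs w"
    using Xs_step by blast
  have "\<beta> * phi_plus \<beta> x - real_of_int (x 0) = phi_plus \<beta> (\<lambda>k. x (Suc k))"
    using phi_step[of x] Xs_bound[OF Suc.prems] beta by (simp add: field_simps)
  then show ?case using Suc.hyps[OF w(3)] by simp
qed

end

context gde begin

definition good :: "real \<Rightarrow> 'v \<Rightarrow> 'v list \<Rightarrow> bool" where
  "good y u ws \<longleftrightarrow> ptl y (lab u ws) \<in> K (endv u ws)"

definition W :: "nat \<Rightarrow> 'v \<Rightarrow> real \<Rightarrow> real" where
  "W n u y = psum n u (\<lambda>ws. if good y u ws then vR (endv u ws) else 0) / lam^n"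

lemma good_Cons: "good y u (w#ws) \<longleftrightarrow> good (\<beta>*y - of_int (l (u,w))) w ws"
  unfolding good_def by simp

lemma good_Nil: "good y u [] \<longleftrightarrow> y \<in> K u"
  unfolding good_def by simp

lemma W_nonneg: "0 \<le> W n u y"
  unfolding W_def using vR_pos lam_pos
  by (intro divide_nonneg_pos psum_nonneg) (auto intro: less_imp_le)

lemma W_le: "W n u y \<le> vR u"
proof -
  have "psum n u (\<lambda>ws. if good y u ws then vR (endv u ws) else 0) \<le> psum n u (\<lambda>ws. vR (endv u ws))"
    by (rule psum_mono) (use vR_pos in \<open>auto intro: less_imp_le\<close>)
  then show ?thesis unfolding W_def psum_vR using lam_pos by (simp add: divide_le_eq mult.commute)
qed

lemma W_0: "W 0 u y = (if y \<in> K u then vR u else 0)"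
  unfolding W_def by (simp add: good_Nil)

lemma W_Suc: "W (Suc n) u y = (\<Sum>j\<in>{j. (u,j)\<in>E}. W n j (\<beta>*y - of_int (l (u,j)))) / lam"
proof -
  have "psum (Suc n) u (\<lambda>ws. if good y u ws then vR (endv u ws) else 0) =
    (\<Sum>j\<in>{j. (u,j)\<in>E}. psum n j (\<lambda>ws. if good (\<beta>*y - of_int (l (u,j))) j ws then vR (endv j ws) else 0))"
    unfolding psum.simps by (intro sum.cong refl psum_cong) (simp_all add: good_Cons)
  then show ?thesis unfolding W_def using lam_pos
    by (simp add: sum_divide_distrib[symmetric] divide_divide_eq_left mult.commute)
qed

lemma W_mono: "W (Suc n) u y \<le> W n u y"
proof (induct n arbitrary: u y)
  case 0
  show ?case
  proof (cases "y \<in> K u")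
    case True
    have "W (Suc 0) u y \<le> (\<Sum>j\<in>{j. (u,j)\<in>E}. vR j) / lam"
      unfolding W_Suc[of 0] using lam_pos W_le
      by (intro divide_right_mono sum_mono) (auto intro: less_imp_le)
    then show ?thesis using True lam_pos by (simp add: W_0 eig)
  next
    case False
    have "\<beta>*y - of_int (l (u,j)) \<notin> K j" if "(u,j) \<in> E" for j
    proof
      assume "\<beta>*y - of_int (l (u,j)) \<in> K j"
      then have "(of_int (l (u,j)) + (\<beta>*y - of_int (l (u,j)))) / \<beta> \<in> K u"
        using K_step that by blast
      then show False using False beta by simp
    qed
    then show ?thesis using False by (simp add: W_Suc[of 0] W_0)
  qed
next
  case (Suc n)
  have "(\<Sum>j\<in>{j. (u,j)\<in>E}. W (Suc n) j (\<beta>*y - of_int (l (u,j)))) \<le> (\<Sum>j\<in>{j. (u,j)\<in>E}. W n j (\<beta>*y - of_int (l (u,j))))"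
    by (intro sum_mono Suc)
  then show ?case using lam_pos W_Suc[of "Suc n" u y] W_Suc[of n u y]
    by (simp add: divide_right_mono)
qed

definition a :: "'v \<Rightarrow> real \<Rightarrow> real" where "a u y = lim (\<lambda>n. W n u y)"

lemma W_lim: "(\<lambda>n. W n u y) \<longlonglongrightarrow> a u y" and a_le: "a u y \<le> W n u y"
proof -
  have "decseq (\<lambda>n. W n u y)" by (rule decseq_SucI) (rule W_mono)
  then obtain L where L: "(\<lambda>n. W n u y) \<longlonglongrightarrow> L" "\<forall>i. L \<le> W i u y"
    using decseq_convergent[of "\<lambda>n. W n u y" 0] W_nonneg by blast
  then have "a u y = L" unfolding a_def by (simp add: limI)
  then show "(\<lambda>n. W n u y) \<longlonglongrightarrow> a u y" "a u y \<le> W n u y" using L by auto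
qed

lemma a_nonneg: "0 \<le> a u y"
  using W_lim by (rule LIMSEQ_le_const) (auto intro: W_nonneg)

lemma a_rec: "a u y = (\<Sum>j\<in>{j. (u,j)\<in>E}. a j (\<beta>*y - of_int (l (u,j)))) / lam"
proof -
  have "(\<lambda>n. W (Suc n) u y) \<longlonglongrightarrow> a u y" by (rule LIMSEQ_Suc[OF W_lim])
  moreover have "(\<lambda>n. W (Suc n) u y) \<longlonglongrightarrow> (\<Sum>j\<in>{j. (u,j)\<in>E}. a j (\<beta>*y - of_int (l (u,j)))) / lam"
    unfolding W_Suc by (intro tendsto_divide tendsto_sum W_lim tendsto_const) (use lam_pos in auto)
  ultimately show ?thesis by (rule LIMSEQ_unique)
qed

lemma a_pos_K: "a u y > 0 \<Longrightarrow> y \<in> K u"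
  using a_le[of u y 0] by (auto simp: W_0 split: if_splits)

lemma good_close:
  assumes "good y u ws" "good y' u ws"
  shows "\<beta>^length ws * \<bar>y - y'\<bar> \<le> 2 * Bd"
proof -
  have "\<bar>ptl y (lab u ws) - ptl y' (lab u ws)\<bar> \<le> 2 * Bd"
    using K_bound assms unfolding good_def by (smt (verit))
  then show ?thesis using ptl_diff[of y "lab u ws" y'] beta by (simp add: abs_mult)
qed

lemma a_sum_le:
  assumes "finite Y"
  shows "(\<Sum>y\<in>Y. a u y) \<le> vR u"
proof -
  have lim0: "(\<lambda>n. 2 * Bd * (inverse \<beta>)^n) \<longlonglongrightarrow> 0"
  proof -
    have "inverse \<beta> < inverse 1" using beta by (intro less_imp_inverse_less) auto
    then have "norm (inverse \<beta>) < 1" using beta by simp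
    then show ?thesis using tendsto_mult[OF tendsto_const LIMSEQ_power_zero] by fastforce
  qed
  have ev: "\<forall>\<^sub>F n in sequentially. \<forall>y1\<in>Y. \<forall>y2\<in>Y. y1 \<noteq> y2 \<longrightarrow> 2 * Bd * (inverse \<beta>)^n < \<bar>y1 - y2\<bar>"
    apply (rule eventually_ball_finite[OF assms], rule ballI)
    apply (rule eventually_ball_finite[OF assms], rule ballI)
    subgoal for y1 y2
      by (cases "y1 = y2") (auto intro: eventually_mono[OF order_tendstoD(2)[OF lim0, of "\<bar>y1-y2\<bar>"]])
    done
  then obtain n where n: "\<forall>y1\<in>Y. \<forall>y2\<in>Y. y1 \<noteq> y2 \<longrightarrow> 2 * Bd * (inverse \<beta>)^n < \<bar>y1 - y2\<bar>"
    using eventually_sequentially by auto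
  have pt: "(\<Sum>y\<in>Y. if good y u ws then vR (endv u ws) else 0) \<le> vR (endv u ws)"
    if "length ws = n" for ws
  proof (cases "\<exists>y0\<in>Y. good y0 u ws")
    case False then show ?thesis using vR_pos[of "endv u ws"] by simp
  next
    case True
    then obtain y0 where y0: "y0 \<in> Y" "good y0 u ws" by blast
    have "\<not> good y u ws" if "y \<in> Y" "y \<noteq> y0" for y
    proof
      assume "good y u ws"
      then have "\<beta>^n * \<bar>y - y0\<bar> \<le> 2 * Bd" using good_close y0 \<open>length ws = n\<close> by blast
      then have "\<bar>y - y0\<bar> \<le> 2 * Bd * (inverse \<beta>)^n"
        using beta by (simp add: field_simps power_inverse)
      then show False using n that y0 by force
    qed
    then have "(\<Sum>y\<in>Y. if good y u ws then vR (endv u ws) else 0)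
        = (\<Sum>y\<in>Y. if y = y0 then vR (endv u ws) else 0)"
      using y0 by (intro sum.cong) auto
    also have "\<dots> = vR (endv u ws)" using y0 assms by simp
    finally show ?thesis by simp
  qed
  have "(\<Sum>y\<in>Y. a u y) \<le> (\<Sum>y\<in>Y. W n u y)" by (intro sum_mono a_le)
  also have "\<dots> = psum n u (\<lambda>ws. \<Sum>y\<in>Y. if good y u ws then vR (endv u ws) else 0) / lam^n"
    unfolding W_def psum_sum by (simp add: sum_divide_distrib)
  also have "\<dots> \<le> psum n u (\<lambda>ws. vR (endv u ws)) / lam^n"
    using lam_pos by (intro divide_right_mono psum_mono pt) auto
  also have "\<dots> = vR u" using lam_pos by (simp add: psum_vR)
  finally show ?thesis .
qed

lemma a_level_finite:
  assumes "c > 0"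
  shows "finite {y. c \<le> a u y}"
proof (rule ccontr)
  assume inf: "infinite {y. c \<le> a u y}"
  obtain N :: nat where N: "vR u / c < N" using reals_Archimedean2 by blast
  obtain Y where Y: "finite Y" "card Y = N" "Y \<subseteq> {y. c \<le> a u y}"
    using infinite_arbitrarily_large[OF inf] by blast
  have "real N * c = (\<Sum>y\<in>Y. c)" using Y by simp
  also have "\<dots> \<le> (\<Sum>y\<in>Y. a u y)" using Y by (intro sum_mono) auto
  also have "\<dots> \<le> vR u" by (rule a_sum_le[OF Y(1)])
  finally show False using N assms by (simp add: field_simps)
qed

lemma a_propagate:
  assumes max: "\<And>u y. a u y \<le> s * vR u" and eq: "a u y = s * vR u" and e: "(u,w) \<in> E"
  shows "a w (\<beta>*y - of_int (l (u,w))) = s * vR w"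
proof -
  let ?N = "{j. (u,j)\<in>E}"
  let ?f = "\<lambda>j. s * vR j - a j (\<beta>*y - of_int (l (u,j)))"
  have "(\<Sum>j\<in>?N. ?f j) = s * (\<Sum>j\<in>?N. vR j) - (\<Sum>j\<in>?N. a j (\<beta>*y - of_int (l (u,j))))"
    by (simp add: sum_subtractf sum_distrib_left)
  also have "\<dots> = s * (lam * vR u) - lam * a u y"
    using lam_pos by (subst a_rec[of u y]) (simp add: eig)
  also have "\<dots> = 0" using eq by simp
  finally have "(\<Sum>j\<in>?N. ?f j) = 0" .
  moreover have "\<forall>j\<in>?N. 0 \<le> ?f j" using max by (auto simp: algebra_simps)
  ultimately have "\<forall>j\<in>?N. ?f j = 0" using sum_nonneg_eq_0_iff[of ?N ?f] by auto
  then show ?thesis using e by auto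
qed

lemma a_all_good:
  assumes max: "\<And>u y. a u y \<le> s * vR u" and s: "s > 0"
  shows "a u y = s * vR u \<Longrightarrow> pth u ws \<Longrightarrow> good y u ws"
proof (induct ws arbitrary: u y)
  case Nil
  then have "a u y > 0" using s vR_pos by simp
  then show ?case using a_pos_K good_Nil by auto
next
  case (Cons w ws)
  then have "a w (\<beta>*y - of_int (l (u,w))) = s * vR w" using a_propagate[OF max] by auto
  then show ?case using Cons by (simp add: good_Cons)
qed

lemma a_max_exists:
  assumes "a u0 y0 > 0"
  shows "\<exists>s u1 y1. s > 0 \<and> (\<forall>u y. a u y \<le> s * vR u) \<and> a u1 y1 = s * vR u1"
proof -
  define b where "b u y = a u y / vR u" for u y
  define c where "c = b u0 y0"
  have c: "c > 0" using assms vR_pos unfolding c_def b_def by simp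
  define S where "S = {(u,y). c \<le> b u y}"
  have "S \<subseteq> (\<Union>u. {u} \<times> {y. c * vR u \<le> a u y})"
    unfolding S_def b_def using vR_pos by (auto simp: field_simps)
  moreover have "finite (\<Union>u. {u} \<times> {y. c * vR u \<le> a u y})"
    using a_level_finite c vR_pos by (intro finite_UN_I finite_cartesian_product) auto
  ultimately have fS: "finite S" by (rule finite_subset)
  have S0: "(u0,y0) \<in> S" unfolding S_def c_def by simp
  define s where "s = Max ((\<lambda>(u,y). b u y) ` S)"
  have sin: "s \<in> (\<lambda>(u,y). b u y) ` S" unfolding s_def using fS S0 by (intro Max_in) auto
  then obtain u1 y1 where u1: "(u1,y1) \<in> S" "s = b u1 y1" by auto
  have sge: "b u y \<le> s" if "(u,y) \<in> S" for u y
    unfolding s_def using fS that by (intro Max_ge) auto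
  have "c \<le> s" using sge[OF S0] c_def by simp
  have "b u y \<le> s" for u y
    using sge[of u y] \<open>c \<le> s\<close> unfolding S_def by (cases "c \<le> b u y") auto
  then have "a u y \<le> s * vR u" for u y
    using vR_pos[of u] unfolding b_def by (simp add: divide_le_eq)
  moreover have "a u1 y1 = s * vR u1" using u1 vR_pos[of u1] unfolding b_def by simp
  ultimately show ?thesis using c \<open>c \<le> s\<close> by (intro exI[of _ s] exI[of _ u1] exI[of _ y1]) auto
qed

lemma K_singleton_if_atom:
  assumes "a u0 y0 > 0"
  shows "\<exists>u1 y1. K u1 \<subseteq> {y1}"
proof -
  obtain s u1 y1 where s: "s > 0" "\<And>u y. a u y \<le> s * vR u" "a u1 y1 = s * vR u1"
    using a_max_exists[OF assms] by blast
  have K: "y = y1" if yK: "y \<in> K u1" for y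
  proof (rule ccontr)
    assume ne: "y \<noteq> y1"
    obtain n where n: "2 * Bd / \<bar>y - y1\<bar> < \<beta>^n" using real_arch_pow beta by blast
    obtain ws where ws: "length ws = n" "pth u1 ws" "good y u1 ws"
      using K_path[OF yK, of n] unfolding good_def by blast
    have "good y1 u1 ws" using a_all_good[OF s(2) s(1) s(3) ws(2)] .
    then have "\<beta>^n * \<bar>y - y1\<bar> \<le> 2 * Bd" using good_close ws by blast
    then show False using n ne by (simp add: field_simps)
  qed
  then show ?thesis by blast
qed

end

lemma cont_two:
  fixes h :: "'a::discrete_topology \<Rightarrow> 'a \<Rightarrow> 'b::topological_space"
  shows "continuous_on UNIV (\<lambda>q::nat \<Rightarrow> 'a. h (q i) (q j))"
proof -
  have "open ((\<lambda>q::nat \<Rightarrow> 'a. h (q i) (q j)) -` B)" if "open B" for B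
  proof -
    have eq: "(\<lambda>q::nat \<Rightarrow> 'a. h (q i) (q j)) -` B =
      (\<Union>(c,d)\<in>{(c,d). h c d \<in> B}. (\<lambda>q. q i) -` {c} \<inter> (\<lambda>q. q j) -` {d})"
      by auto
    have "open ((\<lambda>q::nat \<Rightarrow> 'a. q k) -` {c})" for k c
      by (rule open_vimage[OF discrete_topology_class.open_discrete continuous_on_product_coordinates])
    then show ?thesis unfolding eq by (intro open_UN ballI open_Int) auto
  qed
  then show ?thesis by (simp add: continuous_on_open_vimage[OF open_UNIV])
qed

lemma closed_two:
  fixes P :: "'a::discrete_topology \<Rightarrow> 'a \<Rightarrow> bool"
  shows "closed {q::nat \<Rightarrow> 'a. P (q i) (q j)}"
proof -
  have "{q::nat \<Rightarrow> 'a. P (q i) (q j)} = (\<lambda>q. P (q i) (q j)) -` {True}" by auto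
  then show ?thesis using closed_vimage[OF closed_singleton cont_two[of P i j]] by simp
qed

context gd begin

definition Q :: "'v \<Rightarrow> (nat \<Rightarrow> nat) set" where
  "Q u = {q. (\<forall>k. q k \<in> range (to_nat :: 'v \<Rightarrow> nat)) \<and> q 0 = to_nat u
           \<and> (\<forall>k. ((from_nat (q k) :: 'v), from_nat (q (Suc k))) \<in> E)}"

definition gq :: "(nat \<Rightarrow> nat) \<Rightarrow> real" where
  "gq q = phi_plus \<beta> (\<lambda>k. l ((from_nat (q k) :: 'v), from_nat (q (Suc k))))"

lemma K_eq_gq: "K u = gq ` Q u"
proof
  show "K u \<subseteq> gq ` Q u"
  proof
    fix y assume "y \<in> K u"
    then obtain x p where p: "p 0 = u" "\<forall>k. (p k, p (Suc k)) \<in> E" "\<forall>k. x k = l (p k, p (Suc k))"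
      and y: "y = phi_plus \<beta> x" unfolding K_def Xs_def by blast
    have xe: "x = (\<lambda>k. l (p k, p (Suc k)))" using p(3) by auto
    have "(\<lambda>k. to_nat (p k)) \<in> Q u" using p unfolding Q_def by auto
    moreover have "gq (\<lambda>k. to_nat (p k)) = y" unfolding gq_def y xe by simp
    ultimately show "y \<in> gq ` Q u" by force
  qed
next
  show "gq ` Q u \<subseteq> K u"
  proof
    fix y assume "y \<in> gq ` Q u"
    then obtain q where q: "q \<in> Q u" "y = gq q" by blast
    have "(\<lambda>k. l ((from_nat (q k) :: 'v), from_nat (q (Suc k)))) \<in> Xs u"
      unfolding Xs_def using q(1) unfolding Q_def
      by (intro CollectI exI[of _ "\<lambda>k. (from_nat (q k) :: 'v)"]) auto
    then show "y \<in> K u" unfolding K_def q(2) gq_def by blast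
  qed
qed

lemma Q_compact: "compact (Q u)"
proof -
  let ?T = "range (to_nat :: 'v \<Rightarrow> nat)"
  have "compactin (product_topology (\<lambda>_. euclidean) UNIV) (PiE UNIV (\<lambda>_::nat. ?T))"
    by (subst compactin_PiE) (auto intro: finite_imp_compact)
  then have c1: "compact (PiE UNIV (\<lambda>_::nat. ?T))"
    by (simp add: euclidean_product_topology)
  have c2: "closed ({q::nat \<Rightarrow> nat. q 0 = to_nat u} \<inter>
      (\<Inter>k. {q. ((from_nat (q k) :: 'v), from_nat (q (Suc k))) \<in> E}))"
    by (intro closed_Int closed_INT closed_two[of "\<lambda>a b. a = to_nat u" 0 0, simplified] ballI closed_two)
  have "Q u = PiE UNIV (\<lambda>_::nat. ?T) \<inter> ({q::nat \<Rightarrow> nat. q 0 = to_nat u} \<inter>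
      (\<Inter>k. {q. ((from_nat (q k) :: 'v), from_nat (q (Suc k))) \<in> E}))"
    unfolding Q_def PiE_UNIV_domain by auto
  then show ?thesis using c1 c2 by auto
qed

lemma gq_cont: "continuous_on (Q u) gq"
proof -
  define f where "f k q = real_of_int (l ((from_nat (q k) :: 'v), from_nat (q (Suc k)))) / \<beta>^Suc k" for k q
  have ul: "uniform_limit (Q u) (\<lambda>n q. \<Sum>k<n. f k q) (\<lambda>q. suminf (\<lambda>k. f k q)) sequentially"
  proof (rule Weierstrass_m_test[OF _ geo_bound(1)])
    fix n q assume q: "q \<in> Q u"
    have p: "0 < \<beta> ^ Suc n" using beta by simp
    have "norm (f n q) = \<bar>real_of_int (l ((from_nat (q n) :: 'v), from_nat (q (Suc n))))\<bar> / \<beta> ^ Suc n"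
      using p by (simp add: f_def abs_divide)
    also have "\<dots> \<le> Lb / \<beta> ^ Suc n" using p q Lb_ge unfolding Q_def by (intro divide_right_mono) auto
    finally show "norm (f n q) \<le> Lb / \<beta> ^ Suc n" .
  qed
  have "continuous_on (Q u) (\<lambda>q. \<Sum>k<n. f k q)" for n
    unfolding f_def
    by (intro continuous_on_sum continuous_on_subset[OF cont_two] subset_UNIV)
  then have "continuous_on (Q u) (\<lambda>q. suminf (\<lambda>k. f k q))"
    by (intro uniform_limit_theorem[OF _ ul]) auto
  moreover have "(\<lambda>q. suminf (\<lambda>k. f k q)) = gq"
    unfolding f_def gq_def phi_plus_def by simp
  ultimately show ?thesis by metis
qed

lemma K_compact: "compact (K u)"
  unfolding K_eq_gq by (rule compact_continuous_image[OF gq_cont Q_compact])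

lemma K_closed: "closed (K u)"
  by (rule compact_imp_closed[OF K_compact])

end

lemma sum_pos_ex:
  fixes f :: "'a \<Rightarrow> real"
  assumes "0 < sum f S"
  shows "\<exists>x\<in>S. 0 < f x"
proof (rule ccontr)
  assume "\<not> (\<exists>x\<in>S. 0 < f x)"
  then have "\<And>x. x \<in> S \<Longrightarrow> f x \<le> 0" by auto
  then have "sum f S \<le> 0" by (rule sum_nonpos)
  then show False using assms by simp
qed

lemma mat_pow_Suc: "mat_pow A (Suc k) = mat_pow A k ** A"
  by (simp add: mat_pow_def)

lemma mat_pow_Suc': "mat_pow A (Suc k) = A ** mat_pow A k"
proof (induct k)
  case 0 then show ?case by (simp add: mat_pow_def)
next
  case (Suc k)
  have "mat_pow A (Suc (Suc k)) = (A ** mat_pow A k) ** A" using Suc by (simp add: mat_pow_Suc)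
  also have "\<dots> = A ** mat_pow A (Suc k)" by (simp add: matrix_mul_assoc mat_pow_Suc)
  finally show ?case .
qed

context gd begin

lemma psum_if_const: "psum n u (\<lambda>ws. if c then F ws else 0) = (if c then psum n u F else 0)"
  by (cases c) (simp_all add: psum_zero)

lemma word_mat_psum:
  "(word_mat E l wd *v f) $ i = psum (length wd) i (\<lambda>ws. if lab i ws = wd then f $ (endv i ws) else 0)"
proof (induct wd arbitrary: i)
  case Nil
  then show ?case by (simp add: word_mat_def)
next
  case (Cons a wd)
  have wm: "word_mat E l (a#wd) = label_mat E l a ** word_mat E l wd"
    by (simp add: word_mat_def)
  have "(word_mat E l (a#wd) *v f) $ i = (label_mat E l a *v (word_mat E l wd *v f)) $ i"
    by (simp add: wm matrix_vector_mul_assoc)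
  also have "\<dots> = (\<Sum>j\<in>UNIV. if (i,j) \<in> E then (if l (i,j) = a then (word_mat E l wd *v f) $ j else 0) else 0)"
    by (simp add: matrix_vector_mult_def label_mat_def if_distrib cong: if_cong) (intro sum.cong refl, auto)
  also have "\<dots> = (\<Sum>j\<in>{j. (i,j)\<in>E}. if l (i,j) = a then (word_mat E l wd *v f) $ j else 0)"
    by (simp add: sum.inter_filter[symmetric])
  also have "\<dots> = psum (length (a#wd)) i (\<lambda>ws. if lab i ws = a#wd then f $ (endv i ws) else 0)"
    by (simp add: Cons psum_if_const[symmetric] cong: if_cong) (intro sum.cong refl psum_cong, auto)
  finally show ?case .
qed

lemma mat_pow_path:
  assumes M: "\<And>i j. M $ i $ j = (if (i,j) \<in> E then 1 else 0)"
  shows "mat_pow M k $ i $ j > 0 \<Longrightarrow> \<exists>ws. length ws = k \<and> pth i ws \<and> endv i ws = j"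
proof (induct k arbitrary: i)
  case 0
  then have "i = j" by (simp add: mat_pow_def mat_def split: if_splits)
  then show ?case by (intro exI[of _ "[]"]) auto
next
  case (Suc k)
  then have "0 < (\<Sum>m\<in>UNIV. M $ i $ m * mat_pow M k $ m $ j)"
    by (simp add: mat_pow_Suc' matrix_matrix_mult_def)
  then obtain m where m: "0 < M $ i $ m * mat_pow M k $ m $ j"
    using sum_pos_ex by blast
  then have e: "(i,m) \<in> E" and p: "mat_pow M k $ m $ j > 0" by (auto simp: M split: if_splits)
  obtain ws where "length ws = k" "pth m ws" "endv m ws = j" using Suc.hyps[OF p] by blast
  then show ?case using e by (intro exI[of _ "m#ws"]) auto
qed

lemma pref_labels: "x \<in> Xs u \<Longrightarrow> set (pref x m) \<subseteq> l ` E"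
proof (induct m arbitrary: x u)
  case (Suc m)
  then obtain w where w: "(u,w) \<in> E" "x 0 = l (u,w)" "(\<lambda>k. x (Suc k)) \<in> Xs w"
    using Xs_step by blast
  then show ?case using Suc.hyps[OF w(3)] by auto
qed simp

end

context gde begin

lemma measure_fiber_le:
  fixes \<mu> :: "(nat \<Rightarrow> int) measure" and vL :: "'v \<Rightarrow> real"
  assumes fin: "finite_measure \<mu>"
    and KP: "KP = (\<Union>u. Xs u)"
    and cylm: "\<And>wd. {x \<in> KP. \<forall>i<length wd. x i = wd ! i} \<in> sets \<mu>"
    and cyl: "\<And>wd. measure \<mu> {x \<in> KP. \<forall>i<length wd. x i = wd ! i}
       = (\<Sum>u\<in>UNIV. vL u * psum (length wd) u (\<lambda>p. if lab u p = wd then vR (endv u p) else 0)) / lam ^ length wd"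
    and vL: "\<And>u. vL u \<ge> 0"
  shows "measure \<mu> (phi_plus \<beta> -` {y} \<inter> KP) \<le> (\<Sum>u\<in>UNIV. vL u * W n u y)"
proof -
  define F where "F = phi_plus \<beta> -` {y} \<inter> KP"
  define Bad where "Bad = {(u,ws). length ws = n \<and> pth u ws \<and> \<not> good y u ws}"
  have finBad: "finite Bad"
  proof -
    have "Bad \<subseteq> UNIV \<times> {ws. set ws \<subseteq> UNIV \<and> length ws = n}" unfolding Bad_def by auto
    then show ?thesis by (rule finite_subset) (intro finite_cartesian_product finite_lists_length_eq; simp)
  qed
  have del: "\<exists>d>0. \<forall>z\<in>K (endv u ws). d \<le> dist (ptl y (lab u ws)) z" if "(u,ws) \<in> Bad" for u ws
  proof -
    have "ptl y (lab u ws) \<in> - K (endv u ws)" using that unfolding Bad_def good_def by auto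
    moreover have "open (- K (endv u ws))" using K_closed by auto
    ultimately obtain d where "d > 0" "ball (ptl y (lab u ws)) d \<subseteq> - K (endv u ws)"
      using open_contains_ball by blast
    then show ?thesis by (intro exI[of _ d]) (auto simp: subset_eq)
  qed
  have "\<forall>b\<in>Bad. \<exists>e>0. \<forall>z\<in>K (endv (fst b) (snd b)). e \<le> dist (ptl y (lab (fst b) (snd b))) z"
  proof
    fix b assume "b \<in> Bad"
    then show "\<exists>e>0. \<forall>z\<in>K (endv (fst b) (snd b)). e \<le> dist (ptl y (lab (fst b) (snd b))) z"
      using del[of "fst b" "snd b"] by simp
  qed
  from bchoice[OF this] obtain d where
    d: "\<forall>b\<in>Bad. d b > 0 \<and> (\<forall>z\<in>K (endv (fst b) (snd b)). d b \<le> dist (ptl y (lab (fst b) (snd b))) z)"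
    by blast
  have lim0: "(\<lambda>j. 2 * Bd * (inverse \<beta>)^j) \<longlonglongrightarrow> 0"
  proof -
    have "inverse \<beta> < inverse 1" using beta by (intro less_imp_inverse_less) auto
    then have "norm (inverse \<beta>) < 1" using beta by simp
    then show ?thesis using tendsto_mult[OF tendsto_const LIMSEQ_power_zero] by fastforce
  qed
  have "\<forall>\<^sub>F j in sequentially. \<forall>b\<in>Bad. 2 * Bd * (inverse \<beta>)^j < d b"
    using finBad d by (intro eventually_ball_finite ballI order_tendstoD(2)[OF lim0]) auto
  then obtain j where j: "\<forall>b\<in>Bad. 2 * Bd * (inverse \<beta>)^j < d b"
    unfolding eventually_sequentially by blast
  define m where "m = n + j"
  define C where "C = (\<lambda>x. pref x m) ` F"
  have finC: "finite C"
  proof -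
    have "C \<subseteq> {wd. set wd \<subseteq> l ` E \<and> length wd = m}"
    proof
      fix wd assume "wd \<in> C"
      then obtain x u where "x \<in> Xs u" "wd = pref x m" unfolding C_def F_def KP by auto
      then show "wd \<in> {wd. set wd \<subseteq> l ` E \<and> length wd = m}" using pref_labels by auto
    qed
    then show ?thesis by (rule finite_subset) (intro finite_lists_length_eq; simp)
  qed
  have Csub: "F \<subseteq> (\<Union>wd\<in>C. {x \<in> KP. \<forall>i<length wd. x i = wd ! i})"
  proof
    fix x assume "x \<in> F"
    then show "x \<in> (\<Union>wd\<in>C. {x \<in> KP. \<forall>i<length wd. x i = wd ! i})"
      unfolding C_def F_def using pref_eq[of "pref x m" m x] by (intro UN_I[of "pref x m"]) auto
  qed
  have "measure \<mu> F \<le> measure \<mu> (\<Union>wd\<in>C. {x \<in> KP. \<forall>i<length wd. x i = wd ! i})"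
    by (rule finite_measure.finite_measure_mono[OF fin Csub]) (intro sets.finite_UN finC cylm)
  also have "\<dots> \<le> (\<Sum>wd\<in>C. measure \<mu> {x \<in> KP. \<forall>i<length wd. x i = wd ! i})"
    by (rule measure_UNION_le[OF finC cylm])
  also have "\<dots> = (\<Sum>wd\<in>C. (\<Sum>u\<in>UNIV. vL u * psum m u (\<lambda>p. if lab u p = wd then vR (endv u p) else 0)) / lam ^ m)"
    unfolding cyl by (intro sum.cong refl) (auto simp: C_def)
  also have "\<dots> = (\<Sum>u\<in>UNIV. vL u * psum m u (\<lambda>p. if lab u p \<in> C then vR (endv u p) else 0)) / lam ^ m"
  proof -
    have "(\<Sum>wd\<in>C. psum m u (\<lambda>p. if lab u p = wd then vR (endv u p) else 0)) =
          psum m u (\<lambda>p. if lab u p \<in> C then vR (endv u p) else 0)" for u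
      unfolding psum_sum[symmetric] using finC by (intro psum_cong) (simp add: sum.delta)
    then have e2: "(\<Sum>u\<in>UNIV. \<Sum>wd\<in>C. vL u * psum m u (\<lambda>p. if lab u p = wd then vR (endv u p) else 0))
       = (\<Sum>u\<in>UNIV. vL u * psum m u (\<lambda>p. if lab u p \<in> C then vR (endv u p) else 0))"
      by (simp add: sum_distrib_left[symmetric])
    have "(\<Sum>wd\<in>C. (\<Sum>u\<in>UNIV. vL u * psum m u (\<lambda>p. if lab u p = wd then vR (endv u p) else 0)) / lam ^ m)
       = (\<Sum>wd\<in>C. \<Sum>u\<in>UNIV. vL u * psum m u (\<lambda>p. if lab u p = wd then vR (endv u p) else 0)) / lam ^ m"
      by (rule sum_divide_distrib[symmetric])
    also have "\<dots> = (\<Sum>u\<in>UNIV. \<Sum>wd\<in>C. vL u * psum m u (\<lambda>p. if lab u p = wd then vR (endv u p) else 0)) / lam ^ m"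
      by (subst sum.swap) (rule refl)
    finally show ?thesis unfolding e2 .
  qed
  also have "\<dots> \<le> (\<Sum>u\<in>UNIV. vL u * psum m u (\<lambda>p. if good y u (take n p) then vR (endv u p) else 0)) / lam ^ m"
  proof -
    have pt: "(if lab u p \<in> C then vR (endv u p) else 0) \<le> (if good y u (take n p) then vR (endv u p) else 0)"
      if p: "length p = m" "pth u p" for u p
    proof (cases "lab u p \<in> C")
      case False then show ?thesis using vR_pos[of "endv u p"] by auto
    next
      case True
      then obtain x where x: "x \<in> F" "pref x m = lab u p" unfolding C_def by auto
      then obtain v0 where "x \<in> Xs v0" unfolding F_def KP by auto
      then obtain v' where "ptl (phi_plus \<beta> x) (pref x m) \<in> K v'" using Xs_pref by blast
      then have b1: "\<bar>ptl y (lab u p)\<bar> \<le> Bd" using x K_bound unfolding F_def by auto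
      define ws where "ws = take n p"
      define ws' where "ws' = drop n p"
      define v where "v = endv u ws"
      define t where "t = ptl y (lab u ws)"
      have pe: "p = ws @ ws'" unfolding ws_def ws'_def by simp
      have lws: "length ws = n" "length ws' = j" using p unfolding ws_def ws'_def m_def by auto
      have pws: "pth u ws" "pth v ws'" using p(2) unfolding pe v_def by (auto simp: pth_append)
      have t1: "ptl y (lab u p) = ptl t (lab v ws')"
        unfolding pe t_def v_def by (simp add: lab_append ptl_append)
      show ?thesis
      proof (cases "good y u ws")
        case True
        then have "good y u (take n p)" unfolding ws_def .
        then show ?thesis using vR_pos[of "endv u p"] by auto
      next
        case False
        then have bad: "(u,ws) \<in> Bad" unfolding Bad_def using lws pws by auto
        obtain z where z: "z \<in> K (endv v ws')" using K_nonempty by blast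
        obtain t' where t': "t' \<in> K v" "ptl t' (lab v ws') = z" using K_path_inv[OF pws(2) z] by blast
        have "ptl t (lab v ws') - z = \<beta>^j * (t - t')"
          using ptl_diff[of t "lab v ws'" t'] t' lws by simp
        then have "\<beta>^j * \<bar>t - t'\<bar> = \<bar>ptl t (lab v ws') - z\<bar>"
          using beta by (simp add: abs_mult)
        also have "\<dots> \<le> 2 * Bd" using b1 t1 K_bound[OF z] by linarith
        finally have "\<beta>^j * \<bar>t - t'\<bar> \<le> 2 * Bd" .
        moreover have bj: "0 < \<beta>^j" using beta by simp
        ultimately have "\<bar>t - t'\<bar> \<le> 2 * Bd / \<beta>^j"
          by (simp add: pos_le_divide_eq mult.commute)
        then have tt: "\<bar>t - t'\<bar> \<le> 2 * Bd * (inverse \<beta>)^j"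
          by (simp add: divide_inverse power_inverse)
        have dd: "\<forall>z\<in>K (endv u ws). d (u,ws) \<le> dist (ptl y (lab u ws)) z"
          using d bad by auto
        have "d (u,ws) \<le> dist t t'" using dd t'(1) unfolding v_def t_def by blast
        then have False using tt j[rule_format, OF bad] unfolding dist_real_def by linarith
        then show ?thesis ..
      qed
    qed
    show ?thesis
      using lam_pos vL pt
      by (intro divide_right_mono sum_mono mult_left_mono psum_mono) (auto simp: less_imp_le)
  qed
  also have "\<dots> = (\<Sum>u\<in>UNIV. vL u * W n u y)"
  proof -
    have "psum m u (\<lambda>p. if good y u (take n p) then vR (endv u p) else 0) =
          lam^j * psum n u (\<lambda>ws. if good y u ws then vR (endv u ws) else 0)" for u
    proof -
      have "psum m u (\<lambda>p. if good y u (take n p) then vR (endv u p) else 0) =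
        psum n u (\<lambda>ws. psum j (endv u ws) (\<lambda>ws'. if good y u (take n (ws@ws')) then vR (endv u (ws@ws')) else 0))"
        unfolding m_def by (rule psum_split)
      also have "\<dots> = psum n u (\<lambda>ws. if good y u ws then lam^j * vR (endv u ws) else 0)"
        by (intro psum_cong) (simp add: psum_if_const psum_vR)
      also have "\<dots> = psum n u (\<lambda>ws. lam^j * (if good y u ws then vR (endv u ws) else 0))"
        by (rule psum_cong) simp
      also have "\<dots> = lam^j * psum n u (\<lambda>ws. if good y u ws then vR (endv u ws) else 0)"
        by (rule psum_cmult)
      finally show ?thesis .
    qed
    then show ?thesis unfolding W_def m_def using lam_pos
      by (simp add: sum_divide_distrib power_add)
  qed
  finally show ?thesis unfolding F_def .
qed

end

lemma perfect_uncountable: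
  fixes S :: "real set"
  assumes cl: "closed S" and lp: "\<forall>x\<in>S. x islimpt S" and ne: "S \<noteq> {}"
  shows "uncountable S"
proof
  assume c: "countable S"
  let ?G = "(\<lambda>x. S - {x}) ` S"
  have "S \<subseteq> closure (\<Inter>?G)"
  proof (rule Baire[OF cl])
    show "countable ?G" using c by simp
    fix T assume "T \<in> ?G"
    then obtain x where x: "x \<in> S" "T = S - {x}" by blast
    have "S - {x} = S \<inter> (- {x})" by auto
    then have "openin (top_of_set S) T" using x by (auto intro: openin_open_Int)
    moreover have "S \<subseteq> closure T"
    proof
      fix y assume "y \<in> S"
      show "y \<in> closure T"
      proof (cases "y = x")
        case True
        then have "y islimpt T" using lp x \<open>y \<in> S\<close> by (auto simp: islimpt_def)
        then show ?thesis by (simp add: closure_def)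
      next
        case False
        then have "y \<in> T" using x \<open>y \<in> S\<close> by simp
        then show ?thesis using closure_subset[of T] by (rule_tac subsetD) auto
      qed
    qed
    ultimately show "openin (top_of_set S) T \<and> S \<subseteq> closure T" by blast
  qed
  moreover have "\<Inter>?G = {}" using ne by auto
  ultimately show False using ne by simp
qed

theorem theorem6:
  fixes A :: "int set" and E :: "('v::finite \<times> 'v) set" and l :: "'v \<times> 'v \<Rightarrow> int"
    and \<beta> lam :: real and vL vR :: "real^'v" and \<mu> :: "(nat \<Rightarrow> int) measure"
  assumes A_fin: "finite A"
    and lab: "\<And>e. e \<in> E \<Longrightarrow> l e \<in> A"
    and prim: "primitive_mat (\<Sum>a\<in>A. label_mat E l a)"
    and eig_pos: "lam > 0"
    and vL_pos: "\<And>i. vL $ i > 0" and vR_pos: "\<And>i. vR $ i > 0"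
    and vL_eig: "vL v* (\<Sum>a\<in>A. label_mat E l a) = lam *\<^sub>R vL"
    and vR_eig: "(\<Sum>a\<in>A. label_mat E l a) *v vR = lam *\<^sub>R vR"
    and norm: "vL \<bullet> vR = 1"
    and pis: "pisot \<beta>"
    and prob: "prob_space \<mu>"
    and sets_mu: "sets \<mu> = sets (borel :: (nat \<Rightarrow> int) measure)"
    and supp: "emeasure \<mu> (Kplus E l) = 1"
    and cyl: "\<And>ws. measure \<mu> {x \<in> Kplus E l. \<forall>i<length ws. x i = ws ! i}
                 = (vL \<bullet> (word_mat E l ws *v vR)) / lam ^ length ws"
  shows "(finite (phi_plus \<beta> ` Kplus E l) \<and> purely_atomic (distr \<mu> borel (phi_plus \<beta>)))
       \<or> (perfect_set (phi_plus \<beta> ` Kplus E l) \<and> uncountable (phi_plus \<beta> ` Kplus E l)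
          \<and> atomless (distr \<mu> borel (phi_plus \<beta>)))"
proof -
  interpret P: prob_space \<mu> by (rule prob)
  have beta: "\<beta> > 1" using pis unfolding pisot_def by auto
  define Mx where "Mx = (\<Sum>a\<in>A. label_mat E l a)"
  have Mx: "Mx $ i $ j = (if (i,j) \<in> E then 1 else 0)" for i j
  proof -
    have "Mx $ i $ j = (\<Sum>a\<in>A. if (i,j) \<in> E \<and> l (i,j) = a then 1 else 0)"
      unfolding Mx_def label_mat_def by simp
    also have "\<dots> = (if (i,j) \<in> E then 1 else 0)"
      using lab[of "(i,j)"] A_fin by (cases "(i,j) \<in> E") (auto simp: sum.delta)
    finally show ?thesis .
  qed
  obtain k where k: "k > 0" "\<And>i j. mat_pow Mx k $ i $ j > 0"
    using prim unfolding primitive_mat_def Mx_def by auto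
  have outdeg: "\<exists>w. (u,w) \<in> E" for u
  proof -
    obtain k' where k': "k = Suc k'" using k by (cases k) auto
    have "0 < (\<Sum>m\<in>UNIV. Mx $ u $ m * mat_pow Mx k' $ m $ u)"
      using k(2)[of u u] unfolding k' mat_pow_Suc' matrix_matrix_mult_def by simp
    then obtain m where "0 < Mx $ u $ m * mat_pow Mx k' $ m $ u"
      using sum_pos_ex by blast
    then show ?thesis by (auto simp: Mx split: if_splits)
  qed
  have eig: "(\<Sum>j\<in>{j. (u,j)\<in>E}. vR $ j) = lam * vR $ u" for u
  proof -
    have "(Mx *v vR) $ u = lam * vR $ u" using vR_eig unfolding Mx_def by simp
    moreover have "(Mx *v vR) $ u = (\<Sum>j\<in>UNIV. if (u,j) \<in> E then vR $ j else 0)"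
      by (simp add: matrix_vector_mult_def Mx, intro sum.cong, auto)
    moreover have "(\<Sum>j\<in>UNIV. if (u,j) \<in> E then vR $ j else 0) = (\<Sum>j\<in>{j. (u,j)\<in>E}. vR $ j)"
      by (simp add: sum.inter_filter[symmetric])
    ultimately show ?thesis by simp
  qed
  interpret G: gde E l \<beta> "\<lambda>u. vR $ u" lam
    by unfold_locales (use beta outdeg eig_pos vR_pos eig in auto)
  have KP: "Kplus E l = (\<Union>u. G.Xs u)"
  proof
    show "Kplus E l \<subseteq> (\<Union>u. G.Xs u)"
    proof
      fix x assume "x \<in> Kplus E l"
      then obtain e where e: "\<forall>k. e k \<in> E" "\<forall>k. snd (e k) = fst (e (Suc k))" "\<forall>k. x k = l (e k)"
        unfolding Kplus_def by blast
      have ek: "e k = (fst (e k), fst (e (Suc k)))" for k using e(2) by (metis prod.collapse)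
      have "x \<in> G.Xs (fst (e 0))" unfolding G.Xs_def
        by (rule CollectI, rule exI[of _ "\<lambda>k. fst (e k)"]) (metis e(1) e(3) ek)
      then show "x \<in> (\<Union>u. G.Xs u)" by blast
    qed
  next
    show "(\<Union>u. G.Xs u) \<subseteq> Kplus E l"
    proof
      fix x assume "x \<in> (\<Union>u. G.Xs u)"
      then obtain p where p: "\<forall>k. (p k, p (Suc k)) \<in> E" "\<forall>k. x k = l (p k, p (Suc k))"
        unfolding G.Xs_def by blast
      show "x \<in> Kplus E l" unfolding Kplus_def
        by (rule CollectI, rule exI[of _ "\<lambda>k. (p k, p (Suc k))"]) (use p in auto)
    qed
  qed
  have img: "phi_plus \<beta> ` Kplus E l = (\<Union>u. G.K u)" unfolding KP G.K_def by auto
  have space: "space \<mu> = UNIV" using sets_eq_imp_space_eq[OF sets_mu] by simp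
  have KPm: "Kplus E l \<in> sets \<mu>" using supp emeasure_notin_sets by force
  have KPc: "UNIV - Kplus E l \<in> sets \<mu>" using sets.compl_sets[OF KPm] space by simp
  have compl0: "emeasure \<mu> (UNIV - Kplus E l) = 0"
    using emeasure_compl[OF KPm] P.emeasure_space_1 supp space by simp
  have meas: "phi_plus \<beta> \<in> borel_measurable \<mu>"
  proof -
    have eq: "phi_plus \<beta> = (\<lambda>x. lim (\<lambda>N. \<Sum>k<N. real_of_int (x k) / \<beta>^Suc k))"
      unfolding phi_plus_def suminf_def lim_def sums_def by simp
    have "(\<lambda>x::nat\<Rightarrow>int. \<Sum>k<N. real_of_int (x k) / \<beta>^Suc k) \<in> borel_measurable borel" for N
      by (intro borel_measurable_continuous_onI continuous_on_sum cont_two)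
    then have "phi_plus \<beta> \<in> borel_measurable borel"
      unfolding eq by (rule borel_measurable_lim_metric)
    then show ?thesis using measurable_cong_sets[OF sets_mu refl] by blast
  qed
  show ?thesis
  proof (cases "finite (phi_plus \<beta> ` Kplus E l)")
    case True
    define S where "S = phi_plus \<beta> ` Kplus E l"
    have Sb: "S \<in> sets borel" using True unfolding S_def by (intro borel_closed finite_imp_closed)
    have "emeasure (distr \<mu> borel (phi_plus \<beta>)) (space (distr \<mu> borel (phi_plus \<beta>)) - S)
        = emeasure \<mu> (phi_plus \<beta> -` (UNIV - S) \<inter> space \<mu>)"
      using Sb by (simp add: emeasure_distr[OF meas])
    also have "\<dots> \<le> emeasure \<mu> (UNIV - Kplus E l)"
      using KPc by (intro emeasure_mono) (auto simp: S_def)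
    finally have "emeasure (distr \<mu> borel (phi_plus \<beta>)) (space (distr \<mu> borel (phi_plus \<beta>)) - S) = 0"
      using compl0 by simp
    then have "purely_atomic (distr \<mu> borel (phi_plus \<beta>))"
      unfolding purely_atomic_def
    proof (intro exI[of _ S] conjI ballI)
      show "countable S" using True unfolding S_def by (rule countable_finite)
      show "S \<in> sets (distr \<mu> borel (phi_plus \<beta>))" using Sb by simp
      fix x show "{x} \<in> sets (distr \<mu> borel (phi_plus \<beta>))"
        using borel_closed[OF closed_singleton[of x]] by simp
    qed
    then show ?thesis using True by blast
  next
    case False
    obtain w0 where w0: "infinite (G.K w0)" using False unfolding img by auto
    have Kinf: "infinite (G.K u)" for u
    proof
      assume fin: "finite (G.K u)"
      obtain ws where ws: "length ws = k" "G.pth u ws" "G.endv u ws = w0"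
        using G.mat_pow_path[OF Mx k(2)] by blast
      have "G.K w0 \<subseteq> (\<lambda>y. G.ptl y (G.lab u ws)) ` G.K u"
      proof
        fix z assume "z \<in> G.K w0"
        then have "z \<in> G.K (G.endv u ws)" using ws(3) by simp
        then obtain y where "y \<in> G.K u" "G.ptl y (G.lab u ws) = z" using G.K_path_inv[OF ws(2)] by blast
        then show "z \<in> (\<lambda>y. G.ptl y (G.lab u ws)) ` G.K u" by (intro image_eqI[of _ _ y]) auto
      qed
      then show False using fin w0 finite_surj by blast
    qed
    have closed: "closed (phi_plus \<beta> ` Kplus E l)"
      unfolding img by (rule closed_UN) (simp_all add: G.K_closed)
    have limpt: "y islimpt (phi_plus \<beta> ` Kplus E l)" if y: "y \<in> phi_plus \<beta> ` Kplus E l" for y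
    proof -
      obtain u where yu: "y \<in> G.K u" using y unfolding img by auto
      show ?thesis
      proof (rule islimpt_approachable[THEN iffD2], intro allI impI)
        fix e :: real assume e: "e > 0"
        obtain n where n: "2 * G.Bd / e < \<beta>^n" using real_arch_pow beta by blast
        obtain ws where ws: "length ws = n" "G.pth u ws" "G.ptl y (G.lab u ws) \<in> G.K (G.endv u ws)"
          using G.K_path[OF yu] by blast
        obtain z where z: "z \<in> G.K (G.endv u ws)" "z \<noteq> G.ptl y (G.lab u ws)"
        proof -
          have "G.K (G.endv u ws) - {G.ptl y (G.lab u ws)} \<noteq> {}"
          proof
            assume "G.K (G.endv u ws) - {G.ptl y (G.lab u ws)} = {}"
            then have "G.K (G.endv u ws) \<subseteq> {G.ptl y (G.lab u ws)}" by auto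
            then show False using Kinf[of "G.endv u ws"] finite_subset by blast
          qed
          then show ?thesis using that by blast
        qed
        obtain y' where y': "y' \<in> G.K u" "G.ptl y' (G.lab u ws) = z"
          using G.K_path_inv[OF ws(2) z(1)] by blast
        have d: "G.ptl y (G.lab u ws) - z = \<beta>^n * (y - y')"
          using G.ptl_diff[of y "G.lab u ws" y'] y' ws by simp
        have ne': "y' \<noteq> y" using d z by auto
        have "\<bar>G.ptl y (G.lab u ws) - z\<bar> \<le> 2 * G.Bd"
          using abs_triangle_ineq4[of "G.ptl y (G.lab u ws)" z] G.K_bound[OF ws(3)] G.K_bound[OF z(1)] by linarith
        moreover have "\<bar>G.ptl y (G.lab u ws) - z\<bar> = \<beta>^n * \<bar>y' - y\<bar>"
          unfolding d using beta by (simp add: abs_mult abs_minus_commute)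
        ultimately have b: "\<beta>^n * \<bar>y' - y\<bar> \<le> 2 * G.Bd" by simp
        have "2 * G.Bd < \<beta>^n * e" using n e by (simp add: pos_divide_less_eq mult.commute)
        then have "\<beta>^n * \<bar>y' - y\<bar> < \<beta>^n * e" using b by linarith
        moreover have "0 < \<beta>^n" using beta by simp
        ultimately have lt: "\<bar>y' - y\<bar> < e" by (simp add: mult_less_cancel_left)
        show "\<exists>x'\<in>phi_plus \<beta> ` Kplus E l. x' \<noteq> y \<and> dist x' y < e"
          using ne' lt y' unfolding img by (intro bexI[of _ y']) (auto simp: dist_real_def)
      qed
    qed
    have ne: "phi_plus \<beta> ` Kplus E l \<noteq> {}" using img G.K_nonempty by auto
    have perf: "perfect_set (phi_plus \<beta> ` Kplus E l)"
      unfolding perfect_set_def using closed limpt by blast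
    have unc: "uncountable (phi_plus \<beta> ` Kplus E l)"
      using perfect_uncountable closed limpt ne by blast
    have a0: "G.a u y = 0" for u y
    proof (rule ccontr)
      assume "G.a u y \<noteq> 0"
      then have "G.a u y > 0" using G.a_nonneg[of u y] by simp
      then obtain u1 y1 where "G.K u1 \<subseteq> {y1}" using G.K_singleton_if_atom by blast
      then show False using Kinf[of u1] finite_subset by blast
    qed
    have cylm: "{x \<in> Kplus E l. \<forall>i<length wd. x i = wd ! i} \<in> sets \<mu>" for wd
    proof -
      have "open {x::nat\<Rightarrow>int. \<forall>i\<in>{..<length wd}. x (id i) \<in> {wd ! i}}"
        by (rule product_topology_basis') (auto intro: discrete_topology_class.open_discrete)
      moreover have "{x::nat\<Rightarrow>int. \<forall>i\<in>{..<length wd}. x (id i) \<in> {wd ! i}} = {x. \<forall>i<length wd. x i = wd ! i}"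
        by auto
      ultimately have "open {x::nat\<Rightarrow>int. \<forall>i<length wd. x i = wd ! i}" by simp
      then have "{x::nat\<Rightarrow>int. \<forall>i<length wd. x i = wd ! i} \<in> sets \<mu>"
        unfolding sets_mu by (rule borel_open)
      moreover have "{x \<in> Kplus E l. \<forall>i<length wd. x i = wd ! i} = Kplus E l \<inter> {x. \<forall>i<length wd. x i = wd ! i}"
        by auto
      ultimately show ?thesis using KPm by auto
    qed
    have cyl': "measure \<mu> {x \<in> Kplus E l. \<forall>i<length wd. x i = wd ! i}
       = (\<Sum>u\<in>UNIV. vL $ u * G.psum (length wd) u (\<lambda>p. if G.lab u p = wd then vR $ (G.endv u p) else 0)) / lam ^ length wd" for wd
      unfolding cyl inner_vec_def by (simp add: G.word_mat_psum)
    have atoml: "atomless (distr \<mu> borel (phi_plus \<beta>))"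
      unfolding atomless_def
    proof (intro ballI conjI)
      fix y assume "y \<in> space (distr \<mu> borel (phi_plus \<beta>))"
      show "{y} \<in> sets (distr \<mu> borel (phi_plus \<beta>))" by simp
      define F where "F = phi_plus \<beta> -` {y} \<inter> Kplus E l"
      have "phi_plus \<beta> -` {y} \<inter> space \<mu> \<in> sets \<mu>" by (rule measurable_sets[OF meas]) simp
      then have Fm: "F \<in> sets \<mu>" unfolding F_def using KPm space by auto
      have mle: "measure \<mu> F \<le> (\<Sum>u\<in>UNIV. vL $ u * G.W n u y)" for n
        unfolding F_def
        by (rule G.measure_fiber_le[OF P.finite_measure_axioms KP cylm cyl'])
           (use vL_pos in \<open>auto intro: less_imp_le\<close>)
      have "(\<lambda>n. \<Sum>u\<in>UNIV. vL $ u * G.W n u y) \<longlonglongrightarrow> (\<Sum>u\<in>UNIV. vL $ u * G.a u y)"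
        by (intro tendsto_sum tendsto_mult tendsto_const G.W_lim)
      then have "measure \<mu> F \<le> (\<Sum>u\<in>UNIV. vL $ u * G.a u y)"
        using mle by (intro LIMSEQ_le_const) auto
      then have "measure \<mu> F = 0" using a0 by (simp add: measure_nonneg antisym)
      then have eF: "emeasure \<mu> F = 0" using P.emeasure_eq_measure by simp
      have "emeasure (distr \<mu> borel (phi_plus \<beta>)) {y} = emeasure \<mu> (phi_plus \<beta> -` {y})"
        by (simp add: emeasure_distr[OF meas] space)
      also have "\<dots> \<le> emeasure \<mu> (F \<union> (UNIV - Kplus E l))"
        using Fm KPc by (intro emeasure_mono) (auto simp: F_def)
      also have "\<dots> \<le> emeasure \<mu> F + emeasure \<mu> (UNIV - Kplus E l)"
        using Fm KPc by (intro emeasure_subadditive) auto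
      also have "\<dots> = 0" using eF compl0 by simp
      finally show "emeasure (distr \<mu> borel (phi_plus \<beta>)) {y} = 0" by simp
    qed
    show ?thesis using perf unc atoml by blast
  qed
qed

end
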